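(* Let $\bm\delta=(\delta_1,\dots,\delta_4)$ be fixed positive reals and let $R_1,\dots,R_5\subseteq\mathbb{R}^2$ with $|R_i|\le n$ for every $i\in[5]$. If the number of pairs $(r_1,r_2)\in R_1\times R_2$ with $\|r_1-r_2\|=\delta_1$ is $O(n)$, or the number of pairs $(r_4,r_5)\in R_4\times R_5$ with $\|r_4-r_5\|=\delta_4$ is $O(n)$, then $C_4(R_1,\dots,R_5)=O\left(n\cdot u_2(n,n)\right)$.
   Context: For sets $P_1,\dots,P_5\subseteq\mathbb{R}^2$, $C_4(P_1,\dots,P_5)$ is the number of $5$-tuples $(p_1,\dots,p_5)$ with $p_i\in P_i$, $\|p_i-p_{i+1}\|=\delta_i$ for $i\in[4]$, and $p_i\ne p_j$ for $i\ne j$. $u_2(m,n)$ denotes the maximum, over sets $A$ of $m$ points and $B$ of $n$ points in $\mathbb{R}^2$, of the number of pairs $(a,b)\in A\times B$ at a given fixed distance (the maximum number of incidences between $m$ points and $n$ circles of a fixed radius). *)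

theory Defs
  imports "HOL-Analysis.Analysis"
begin

type_synonym pt = "real ^ 2"

definition dist_pairs :: "real \<Rightarrow> pt set \<Rightarrow> pt set \<Rightarrow> nat" where
  "dist_pairs d A B = card {(a, b). a \<in> A \<and> b \<in> B \<and> norm (a - b) = d}"

definition C4 :: "real \<Rightarrow> real \<Rightarrow> real \<Rightarrow> real \<Rightarrow>
    pt set \<Rightarrow> pt set \<Rightarrow> pt set \<Rightarrow> pt set \<Rightarrow> pt set \<Rightarrow> nat" where
  "C4 d1 d2 d3 d4 P1 P2 P3 P4 P5 = card {(p1, p2, p3, p4, p5).
      p1 \<in> P1 \<and> p2 \<in> P2 \<and> p3 \<in> P3 \<and> p4 \<in> P4 \<and> p5 \<in> P5 \<and>
      norm (p1 - p2) = d1 \<and> norm (p2 - p3) = d2 \<and> norm (p3 - p4) = d3 \<and> norm (p4 - p5) = d4 \<and>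
      distinct [p1, p2, p3, p4, p5]}"

text \<open>u_2(m,n): maximum number of unit-distance pairs between m points and n points in the
  plane (by scaling, the same for any fixed positive distance).\<close>
definition u2 :: "nat \<Rightarrow> nat \<Rightarrow> nat" where
  "u2 m n = Sup {dist_pairs 1 A B | A B. finite A \<and> card A = m \<and> finite B \<and> card B = n}"

end

theory Submission
  imports Defs
begin


lemma norm2_coords: "(norm (v::pt))^2 = (v$1)^2 + (v$2)^2"
  unfolding power2_norm_eq_inner by (simp add: inner_vec_def sum_2 power2_eq_square)

lemma alg1: "(w1 - U1)^2 + (w2 - U2)^2 = (w1^2 + w2^2) - 2*(w1*U1 + w2*U2) + (U1^2 + U2^2)" for w1 w2 U1 U2 :: real
  by algebra

lemma alg2: "(- w1 * U2 + w2 * U1)^2 + (w1*U1 + w2*U2)^2 = (w1^2 + w2^2) * (U1^2 + U2^2)" for w1 w2 U1 U2 :: real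
  by algebra

lemma alg3: "D1 * (U1^2 + U2^2) = U1 * (D1 * U1 + D2 * U2) - U2 * (- D1 * U2 + D2 * U1)"
  "D2 * (U1^2 + U2^2) = U2 * (D1 * U1 + D2 * U2) + U1 * (- D1 * U2 + D2 * U1)" for D1 D2 U1 U2 :: real
  by algebra+

lemma vec2_eq: "(x::pt)$1 = y$1 \<Longrightarrow> x$2 = y$2 \<Longrightarrow> x = y"
  by (simp add: vec_eq_iff forall_2)



lemma lin_aux: "A = (a2::real) \<Longrightarrow> A - 2 * B + V = b2 \<Longrightarrow> c = (a2 + V - b2) / 2 \<Longrightarrow> B = c"
  by (simp add: field_simps)

lemma circ_card:
  fixes p q :: pt
  assumes pq: "p \<noteq> q" and fin: "finite S"
    and S: "\<And>x. x \<in> S \<Longrightarrow> norm (x - p) = a \<and> norm (x - q) = b"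
  shows "card S \<le> 2"
proof -
  define U1 where "U1 = q$1 - p$1"
  define U2 where "U2 = q$2 - p$2"
  have nz: "\<not> (U1 = 0 \<and> U2 = 0)"
  proof
    assume "U1 = 0 \<and> U2 = 0"
    then have "p$1 = q$1" "p$2 = q$2" unfolding U1_def U2_def by simp_all
    then have "p = q" by (rule vec2_eq)
    with pq show False by simp
  qed
  have U: "U1^2 + U2^2 > 0" using nz by (simp add: sum_power2_gt_zero_iff)
  define c where "c = (a^2 + (U1^2 + U2^2) - b^2) / 2"
  define f where "f x = - (x$1 - p$1) * U2 + (x$2 - p$2) * U1" for x :: pt
  have dot: "(x$1 - p$1) * U1 + (x$2 - p$2) * U2 = c" and
       sq: "(x$1 - p$1)^2 + (x$2 - p$2)^2 = a^2" if "x \<in> S" for x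
  proof -
    have e1: "(x$1 - p$1)^2 + (x$2 - p$2)^2 = a^2"
      using S[OF that] norm2_coords[of "x - p"] by simp
    have e2: "(x$1 - q$1)^2 + (x$2 - q$2)^2 = b^2"
      using S[OF that] norm2_coords[of "x - q"] by simp
    show "(x$1 - p$1)^2 + (x$2 - p$2)^2 = a^2" by (rule e1)
    have "x$1 - q$1 = (x$1 - p$1) - U1" "x$2 - q$2 = (x$2 - p$2) - U2"
      unfolding U1_def U2_def by simp_all
    with e2 have "((x$1 - p$1) - U1)^2 + ((x$2 - p$2) - U2)^2 = b^2" by simp
    then have "((x$1 - p$1)^2 + (x$2 - p$2)^2) - 2*((x$1 - p$1)*U1 + (x$2 - p$2)*U2) + (U1^2 + U2^2) = b^2"
      by (simp only: alg1)
    from lin_aux[OF e1 this c_def] show "(x$1 - p$1) * U1 + (x$2 - p$2) * U2 = c" .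
  qed
  have fsq: "(f x)^2 = a^2 * (U1^2 + U2^2) - c^2" if "x \<in> S" for x
  proof -
    have "(f x)^2 + c^2 = ((x$1 - p$1)^2 + (x$2 - p$2)^2) * (U1^2 + U2^2)"
      using alg2[of "x$1 - p$1" U2 "x$2 - p$2" U1] unfolding dot[OF that, symmetric] f_def .
    then show ?thesis using sq[OF that] by simp
  qed
  have inj: "inj_on f S"
  proof (rule inj_onI)
    fix x y assume x: "x \<in> S" and y: "y \<in> S" and fe: "f x = f y"
    define D1 where "D1 = x$1 - y$1"
    define D2 where "D2 = x$2 - y$2"
    have h1: "D1 * U1 + D2 * U2 = 0"
    proof -
      have "D1 * U1 + D2 * U2 = ((x$1 - p$1) * U1 + (x$2 - p$2) * U2) - ((y$1 - p$1) * U1 + (y$2 - p$2) * U2)"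
        unfolding D1_def D2_def by (simp add: algebra_simps)
      then show ?thesis using dot[OF x] dot[OF y] by simp
    qed
    have h2: "- D1 * U2 + D2 * U1 = 0"
    proof -
      have "- D1 * U2 + D2 * U1 = f x - f y"
        unfolding D1_def D2_def f_def by (simp add: algebra_simps)
      then show ?thesis using fe by simp
    qed
    have "D1 * (U1^2 + U2^2) = 0" using alg3(1)[of D1 U1 U2 D2] h1 h2 by simp
    moreover have "D2 * (U1^2 + U2^2) = 0" using alg3(2)[of D2 U1 U2 D1] h1 h2 by simp
    ultimately have "D1 = 0" "D2 = 0" using U by auto
    then show "x = y" unfolding D1_def D2_def by (intro vec2_eq) simp_all
  qed
  define r where "r = sqrt (a^2 * (U1^2 + U2^2) - c^2)"
  have "f ` S \<subseteq> {r, -r}"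
  proof
    fix t assume "t \<in> f ` S"
    then obtain x where x: "x \<in> S" "t = f x" by auto
    have "sqrt (t^2) = r" using fsq[OF x(1)] x(2) unfolding r_def by simp
    then have "\<bar>t\<bar> = r" by simp
    then show "t \<in> {r, -r}" by auto
  qed
  then have "card (f ` S) \<le> card {r, -r}" by (rule card_mono[rotated]) simp
  also have "\<dots> \<le> 2" by (simp add: card_insert_if)
  finally show ?thesis using card_image[OF inj] by simp
qed

lemma dp_fin: "finite A \<Longrightarrow> finite B \<Longrightarrow> finite {(a, b). a \<in> A \<and> b \<in> B \<and> norm (a - b) = (d::real)}"
  by (rule finite_subset[of _ "A \<times> B"]) auto

lemma dp_mono: "finite A' \<Longrightarrow> finite B' \<Longrightarrow> A \<subseteq> A' \<Longrightarrow> B \<subseteq> B' \<Longrightarrow> dist_pairs d A B \<le> dist_pairs d A' B'"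
  unfolding dist_pairs_def by (rule card_mono[OF dp_fin]) auto

lemma dp_le_prod: "finite A \<Longrightarrow> finite B \<Longrightarrow> dist_pairs d A B \<le> card A * card B"
  unfolding dist_pairs_def card_cartesian_product[symmetric]
  by (rule card_mono) auto

lemma enlarge:
  fixes A :: "pt set"
  assumes "finite A" "card A \<le> n"
  shows "\<exists>A'. finite A' \<and> card A' = n \<and> A \<subseteq> A'"
proof -
  have "infinite (UNIV :: pt set)" by (rule infinite_UNIV_vec) (rule infinite_UNIV_char_0)
  then have "infinite (UNIV - A)" using assms(1) by (metis Diff_infinite_finite)
  then obtain B where B: "finite B" "card B = n - card A" "B \<subseteq> UNIV - A"
    using infinite_arbitrarily_large by blast
  have "card (A \<union> B) = card A + card B" using B assms(1) by (subst card_Un_disjoint) auto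
  then show ?thesis using B assms by (intro exI[of _ "A \<union> B"]) auto
qed

lemma norm_g: "d > 0 \<Longrightarrow> norm (inverse d *\<^sub>R (a::pt) - inverse d *\<^sub>R b) = inverse d * norm (a - b)"
  by (simp add: scaleR_diff_right[symmetric])

lemma dp_scale:
  fixes A B :: "pt set"
  assumes d: "d > 0"
  shows "dist_pairs d A B = dist_pairs 1 ((\<lambda>x. inverse d *\<^sub>R x) ` A) ((\<lambda>x. inverse d *\<^sub>R x) ` B)"
proof -
  let ?g = "\<lambda>x::pt. inverse d *\<^sub>R x"
  let ?h = "\<lambda>(a, b). (?g a, ?g b)"
  have inj: "inj ?g" using d by (intro injI) simp
  have eq: "{(a, b). a \<in> ?g ` A \<and> b \<in> ?g ` B \<and> norm (a - b) = 1}
      = ?h ` {(a, b). a \<in> A \<and> b \<in> B \<and> norm (a - b) = d}"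
  proof (rule set_eqI)
    fix z :: "pt \<times> pt"
    show "z \<in> {(a, b). a \<in> ?g ` A \<and> b \<in> ?g ` B \<and> norm (a - b) = 1} \<longleftrightarrow>
          z \<in> ?h ` {(a, b). a \<in> A \<and> b \<in> B \<and> norm (a - b) = d}"
    proof
      assume "z \<in> {(a, b). a \<in> ?g ` A \<and> b \<in> ?g ` B \<and> norm (a - b) = 1}"
      then obtain a b where z: "z = (?g a, ?g b)" and a: "a \<in> A" and b: "b \<in> B"
        and n: "norm (?g a - ?g b) = 1" by auto
      have h: "inverse d * norm (a - b) = 1" using n by (simp only: norm_g[OF d])
      then have "norm (a - b) = d" using d by (simp add: field_simps)
      with a b z show "z \<in> ?h ` {(a, b). a \<in> A \<and> b \<in> B \<and> norm (a - b) = d}"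
        by (intro image_eqI[of _ _ "(a, b)"]) auto
    next
      assume "z \<in> ?h ` {(a, b). a \<in> A \<and> b \<in> B \<and> norm (a - b) = d}"
      then obtain a b where z: "z = (?g a, ?g b)" and a: "a \<in> A" and b: "b \<in> B"
        and n: "norm (a - b) = d" by auto
      have "norm (?g a - ?g b) = 1" using norm_g[OF d, of a b] n d by simp
      with a b z show "z \<in> {(a, b). a \<in> ?g ` A \<and> b \<in> ?g ` B \<and> norm (a - b) = 1}" by auto
    qed
  qed
  have inj2: "inj_on ?h X" for X
    using inj by (auto simp: inj_on_def inj_def)
  show ?thesis unfolding dist_pairs_def eq by (simp add: card_image[OF inj2])
qed

lemma dp_le_u2:
  assumes d: "d > 0" and A: "finite A" "card A \<le> n" and B: "finite B" "card B \<le> n"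
  shows "dist_pairs d A B \<le> u2 n n"
proof -
  obtain A' where A': "finite A'" "card A' = n" "A \<subseteq> A'" using enlarge A by blast
  obtain B' where B': "finite B'" "card B' = n" "B \<subseteq> B'" using enlarge B by blast
  let ?g = "\<lambda>x::pt. inverse d *\<^sub>R x"
  have inj: "inj ?g" using d by (intro injI) simp
  have cA: "card (?g ` A') = n" using A' card_image[OF inj_on_subset[OF inj]] by simp
  have cB: "card (?g ` B') = n" using B' card_image[OF inj_on_subset[OF inj]] by simp
  have "dist_pairs d A B \<le> dist_pairs d A' B'" using A' B' by (intro dp_mono) auto
  also have "\<dots> = dist_pairs 1 (?g ` A') (?g ` B')" by (rule dp_scale[OF d])
  also have "\<dots> \<le> u2 n n" unfolding u2_def
  proof (rule cSup_upper)
    show "dist_pairs 1 (?g ` A') (?g ` B') \<in> {dist_pairs 1 A B |A B. finite A \<and> card A = n \<and> finite B \<and> card B = n}"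
      using A'(1) B'(1) cA cB by blast
    show "bdd_above {dist_pairs 1 A B |A B. finite A \<and> card A = n \<and> finite B \<and> card B = n}"
    proof (rule bdd_aboveI)
      fix x assume "x \<in> {dist_pairs 1 A B |A B. finite A \<and> card A = n \<and> finite B \<and> card B = n}"
      then obtain A B where "x = dist_pairs 1 A B" "finite A" "card A = n" "finite B" "card B = n"
        by blast
      then show "x \<le> n * n" using dp_le_prod[of A B 1] by simp
    qed
  qed
  finally show ?thesis .
qed

lemma C4_bound:
  assumes f: "finite R1" "finite R2" "finite R3" "finite R4" "finite R5"
  shows "C4 d1 d2 d3 d4 R1 R2 R3 R4 R5 \<le> 2 * dist_pairs d1 R1 R2 * dist_pairs d4 R4 R5"
proof -
  define D1 where "D1 = {(a, b). a \<in> R1 \<and> b \<in> R2 \<and> norm (a - b) = d1}"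
  define D4 where "D4 = {(a, b). a \<in> R4 \<and> b \<in> R5 \<and> norm (a - b) = d4}"
  define I where "I b c = {x \<in> R3. norm (x - b) = d2 \<and> norm (x - c) = d3 \<and> b \<noteq> c}" for b c :: pt
  define F where "F z w = (\<lambda>x. (fst z, snd z, x, fst w, snd w)) ` I (snd z) (fst w)" for z w :: "pt \<times> pt"
  define T where "T = {(p1, p2, p3, p4, p5).
      p1 \<in> R1 \<and> p2 \<in> R2 \<and> p3 \<in> R3 \<and> p4 \<in> R4 \<and> p5 \<in> R5 \<and>
      norm (p1 - p2) = d1 \<and> norm (p2 - p3) = d2 \<and> norm (p3 - p4) = d3 \<and> norm (p4 - p5) = d4 \<and>
      distinct [p1, p2, p3, p4, p5]}"
  have fD1: "finite D1" unfolding D1_def using dp_fin f by blast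
  have fD4: "finite D4" unfolding D4_def using dp_fin f by blast
  have fI: "finite (I b c)" for b c unfolding I_def using f(3) by simp
  have fF: "finite (F z w)" for z w unfolding F_def using fI by simp
  have cI: "card (I b c) \<le> 2" for b c
  proof (cases "b = c")
    case True
    then show ?thesis unfolding I_def by simp
  next
    case False
    show ?thesis by (rule circ_card[OF False fI, where a=d2 and b=d3]) (auto simp: I_def)
  qed
  have cF: "card (F z w) \<le> 2" for z w
    unfolding F_def using card_image_le[OF fI] cI order_trans by blast
  have sub: "T \<subseteq> (\<Union>z\<in>D1. \<Union>w\<in>D4. F z w)"
  proof
    fix t assume "t \<in> T"
    then obtain p1 p2 p3 p4 p5 where t: "t = (p1, p2, p3, p4, p5)" and
      m: "p1 \<in> R1" "p2 \<in> R2" "p3 \<in> R3" "p4 \<in> R4" "p5 \<in> R5"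
      "norm (p1 - p2) = d1" "norm (p2 - p3) = d2" "norm (p3 - p4) = d3" "norm (p4 - p5) = d4"
      "distinct [p1, p2, p3, p4, p5]"
      unfolding T_def by blast
    have "p3 \<in> I p2 p4" unfolding I_def using m by (auto simp: norm_minus_commute)
    then have "t \<in> F (p1, p2) (p4, p5)" unfolding F_def t by auto
    moreover have "(p1, p2) \<in> D1" "(p4, p5) \<in> D4" unfolding D1_def D4_def using m by auto
    ultimately show "t \<in> (\<Union>z\<in>D1. \<Union>w\<in>D4. F z w)" by blast
  qed
  have "card T \<le> card (\<Union>z\<in>D1. \<Union>w\<in>D4. F z w)"
    by (rule card_mono[OF _ sub]) (use fD1 fD4 fF in auto)
  also have "\<dots> \<le> (\<Sum>z\<in>D1. card (\<Union>w\<in>D4. F z w))" by (rule card_UN_le[OF fD1])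
  also have "\<dots> \<le> (\<Sum>z\<in>D1. \<Sum>w\<in>D4. card (F z w))"
    by (rule sum_mono) (rule card_UN_le[OF fD4])
  also have "\<dots> \<le> (\<Sum>z\<in>D1. \<Sum>w\<in>D4. 2)"
    by (intro sum_mono cF)
  also have "\<dots> = 2 * card D1 * card D4" by simp
  finally show ?thesis unfolding C4_def dist_pairs_def T_def D1_def D4_def by simp
qed

theorem lemma3p5:
  fixes d1 d2 d3 d4 :: real
  assumes "d1 > 0" "d2 > 0" "d3 > 0" "d4 > 0"
  shows "\<forall>K::real. \<exists>C::real. \<forall>(n::nat) (R1::pt set) R2 R3 R4 R5.
     finite R1 \<and> finite R2 \<and> finite R3 \<and> finite R4 \<and> finite R5 \<and>
     card R1 \<le> n \<and> card R2 \<le> n \<and> card R3 \<le> n \<and> card R4 \<le> n \<and> card R5 \<le> n \<and>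
     (real (dist_pairs d1 R1 R2) \<le> K * real n \<or> real (dist_pairs d4 R4 R5) \<le> K * real n)
     \<longrightarrow> real (C4 d1 d2 d3 d4 R1 R2 R3 R4 R5) \<le> C * real n * real (u2 n n)"
proof (rule allI, rule_tac x = "2 * \<bar>K\<bar>" in exI, intro allI impI, elim conjE)
  fix K :: real and n :: nat and R1 R2 R3 R4 R5 :: "pt set"
  assume f: "finite R1" "finite R2" "finite R3" "finite R4" "finite R5"
    and c: "card R1 \<le> n" "card R2 \<le> n" "card R3 \<le> n" "card R4 \<le> n" "card R5 \<le> n"
    and h: "real (dist_pairs d1 R1 R2) \<le> K * real n \<or> real (dist_pairs d4 R4 R5) \<le> K * real n"
  define x where "x = real (dist_pairs d1 R1 R2)"
  define y where "y = real (dist_pairs d4 R4 R5)"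
  define u where "u = real (u2 n n)"
  have x: "x \<le> u" unfolding x_def u_def using dp_le_u2[OF assms(1) f(1) c(1) f(2) c(2)] by simp
  have y: "y \<le> u" unfolding y_def u_def using dp_le_u2[OF assms(4) f(4) c(4) f(5) c(5)] by simp
  have x0: "x \<ge> 0" "y \<ge> 0" unfolding x_def y_def by simp_all
  have hK: "x \<le> \<bar>K\<bar> * real n \<or> y \<le> \<bar>K\<bar> * real n"
  proof -
    have "K * real n \<le> \<bar>K\<bar> * real n" by (simp add: mult_right_mono)
    then show ?thesis using h unfolding x_def y_def by linarith
  qed
  have "real (C4 d1 d2 d3 d4 R1 R2 R3 R4 R5) \<le> 2 * x * y"
    using C4_bound[OF f, of d1 d2 d3 d4] unfolding x_def y_def
    by (metis of_nat_le_iff of_nat_mult of_nat_numeral)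
  also have "\<dots> \<le> 2 * \<bar>K\<bar> * real n * u"
  proof (cases "x \<le> \<bar>K\<bar> * real n")
    case True
    have "x * y \<le> (\<bar>K\<bar> * real n) * u" using True y x0 by (intro mult_mono) auto
    then show ?thesis by (simp add: algebra_simps)
  next
    case False
    then have yb: "y \<le> \<bar>K\<bar> * real n" using hK by simp
    have "x * y \<le> u * (\<bar>K\<bar> * real n)" using yb x x0 by (intro mult_mono) auto
    then show ?thesis by (simp add: algebra_simps)
  qed
  finally show "real (C4 d1 d2 d3 d4 R1 R2 R3 R4 R5) \<le> 2 * \<bar>K\<bar> * real n * real (u2 n n)"
    unfolding u_def .
qed

end
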